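(* Let $F_0,F_1$ be distribution functions of real random variables $Y_0,Y_1$ and $\alpha\in(0,1)$. If $$1+\inf_{y\in\mathbb{R}}\min\{F_1(y)-P(Y_0<y),\,0\}>\alpha,$$ then every interval $I$ such that $P(Y_1-Y_0\in I)\ge1-\alpha$ for every joint distribution of $(Y_0,Y_1)$ with marginals $F_0,F_1$ satisfies $I\cap(-\infty,0]\neq\emptyset$ (i.e. the left endpoint of $I$ cannot be strictly positive).
   Context: $Y_0,Y_1$ are potential outcomes with known marginal cdfs $F_0,F_1$ and unknown joint distribution; $\mathrm{ITE}=Y_1-Y_0$. The quantity $1+\inf_y\min\{F_1(y)-P(Y_0<y),0\}$ is the sharp upper bound on $P(Y_1-Y_0\le0)$ over all joint distributions with these marginals. *)

theory Defs
  imports "HOL-Probability.Probability"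
begin

definition coupling :: "real measure \<Rightarrow> real measure \<Rightarrow> (real \<times> real) measure \<Rightarrow> bool" where
  "coupling M0 M1 J \<longleftrightarrow> prob_space J \<and> sets J = sets borel \<and>
     distr J borel fst = M0 \<and> distr J borel snd = M1"

end

theory Submission
  imports Defs
begin

lemma shift_measure_aux:
  fixes s c :: real
  assumes "0 \<le> s" "s < 1" "0 \<le> c" "c \<le> 1"
  shows "measure lborel {u\<in>{0<..<1}. (if s < u then u - s else u + 1 - s) \<le> c} = c"
proof (cases "c + s < 1")
  case True
  then have "{u\<in>{0<..<1}. (if s < u then u - s else u + 1 - s) \<le> c} = {s<..c+s}"
    using assms by (auto split: if_splits)
  moreover have "measure lborel {s<..c+s} = c + s - s" by (rule measure_lborel_Ioc) (use assms True in simp)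
  ultimately show ?thesis by simp
next
  case False
  then have "{u\<in>{0<..<1}. (if s < u then u - s else u + 1 - s) \<le> c} = {s<..<1} \<union> {0<..c+s-1}"
    using assms by (auto split: if_splits)
  moreover have "measure lborel ({s<..<1} \<union> {0<..c+s-1}) = measure lborel {s<..<1} + measure lborel {0<..c+s-1}"
    using assms False by (intro measure_Union) auto
  moreover have "measure lborel {s<..<1} = 1 - s" by (rule measure_lborel_Ioo) (use assms in simp)
  moreover have "measure lborel {0<..c+s-1} = c+s-1 - 0" by (rule measure_lborel_Ioc) (use assms False in simp)
  ultimately show ?thesis using False by simp
qed

theorem mainTheorem12:
  fixes M0 M1 :: "real measure" and \<alpha> :: real and I :: "real set"
  assumes "prob_space M0" and "sets M0 = sets borel"
    and "prob_space M1" and "sets M1 = sets borel"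
    and "0 < \<alpha>" and "\<alpha> < 1"
    and "1 + (INF y. min (cdf M1 y - measure M0 {..<y}) 0) > \<alpha>"
    and "is_interval I"
    and "\<forall>J. coupling M0 M1 J \<longrightarrow>
           measure J {p. snd p - fst p \<in> I} \<ge> 1 - \<alpha>"
  shows "I \<inter> {..0} \<noteq> {}"
proof (rule ccontr)
  assume "\<not> I \<inter> {..0} \<noteq> {}"
  then have Ipos: "\<And>x. x \<in> I \<Longrightarrow> 0 < x" by force
  interpret A: cdf_distribution M0 using assms(1,2)
    by (simp add: cdf_distribution_def real_distribution_def real_distribution_axioms_def)
  interpret B: cdf_distribution M1 using assms(3,4)
    by (simp add: cdf_distribution_def real_distribution_def real_distribution_axioms_def)
  define m where "m = (INF y. min (cdf M1 y - measure M0 {..<y}) 0)"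
  define s where "s = - m"
  have bdd: "bdd_below (range (\<lambda>y. min (cdf M1 y - measure M0 {..<y}) 0))"
  proof (rule bdd_belowI[of _ "-1"])
    fix x assume "x \<in> range (\<lambda>y. min (cdf M1 y - measure M0 {..<y}) 0)"
    then obtain y where "x = min (cdf M1 y - measure M0 {..<y}) 0" by auto
    moreover have "cdf M1 y \<ge> 0" by (rule B.cdf_nonneg)
    moreover have "measure M0 {..<y} \<le> 1" by (rule A.prob_le_1)
    ultimately show "-1 \<le> x" by linarith
  qed
  have lowm: "m \<le> min (cdf M1 y - measure M0 {..<y}) 0" for y
    unfolding m_def by (rule cINF_lower[OF bdd]) simp
  have s_ge: "0 \<le> s" using lowm[of 0] s_def by simp
  have s_lt: "s < 1 - \<alpha>" using assms(7) m_def s_def by simp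
  have key: "measure M0 {..<z} - s \<le> cdf M1 z" for z
    using lowm[of z] s_def by simp
  define Q0 where "Q0 = (\<lambda>w::real. if w \<in> {0<..<1} then Inf {x. w \<le> cdf M0 x} else 0)"
  define Q1 where "Q1 = (\<lambda>w::real. if w \<in> {0<..<1} then Inf {x. w \<le> cdf M1 x} else 0)"
  define T where "T = (\<lambda>u::real. if s < u then u - s else u + 1 - s)"
  have Q0m[measurable]: "Q0 \<in> borel_measurable borel"
    using measurable_restrict_space_iff[where \<Omega>="{0<..<1::real}" and M=borel and N=borel and c=0, THEN iffD1, OF _ _ A.measurable_CI]
    unfolding Q0_def by simp
  have Q1m[measurable]: "Q1 \<in> borel_measurable borel"
    using measurable_restrict_space_iff[where \<Omega>="{0<..<1::real}" and M=borel and N=borel and c=0, THEN iffD1, OF _ _ B.measurable_CI]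
    unfolding Q1_def by simp
  have Tm[measurable]: "T \<in> borel_measurable borel"
    unfolding T_def by measurable
  let ?\<Omega> = "restrict_space lborel {0<..<1::real}"
  interpret \<Omega>: prob_space ?\<Omega>
    by (auto simp: emeasure_restrict_space space_restrict_space intro!: prob_spaceI)
  have spO: "space ?\<Omega> = {0<..<1}" by (simp add: space_restrict_space)
  define f where "f = (\<lambda>u. (Q0 u, Q1 (T u)))"
  have fm[measurable]: "f \<in> borel_measurable ?\<Omega>"
    unfolding f_def by (intro measurable_restrict_space1) measurable
  define J where "J = distr ?\<Omega> borel f"
  interpret J: prob_space J unfolding J_def by (rule \<Omega>.prob_space_distr[OF fm])
  have Q0T: "Q1 (T u) \<le> Q0 u" if "s < u" "u < 1" for u
  proof -
    have u: "0 < u" using that s_ge by simp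
    define y where "y = Inf {x. u \<le> cdf M0 x}"
    have "u \<le> cdf M0 y" using A.pseudoinverse[of u y] u that y_def by simp
    have "u - s \<le> cdf M1 z" if "y < z" for z
    proof -
      have "cdf M0 y \<le> measure M0 {..<z}"
        unfolding cdf_def using that by (intro A.finite_measure_mono) auto
      then show ?thesis using key[of z] \<open>u \<le> cdf M0 y\<close> by simp
    qed
    then have "u - s \<le> cdf M1 y"
      using B.cdf_is_right_cont[of y]
      by (intro tendsto_lowerbound[of "cdf M1" _ "at_right y"])
         (auto simp: continuous_within eventually_at_right_less intro: eventually_mono[OF eventually_at_right_less])
    then have "Inf {x. u - s \<le> cdf M1 x} \<le> y"
      using B.pseudoinverse[of "u - s" y] that s_ge by simp
    then have "Inf {x. u - s \<le> cdf M1 x} \<le> Inf {x. u \<le> cdf M0 x}" using y_def by simp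
    then show ?thesis using that u s_ge unfolding Q0_def Q1_def T_def by simp
  qed
  have fst_eq: "distr J borel fst = M0"
  proof -
    have "distr J borel fst = distr ?\<Omega> borel (fst \<circ> f)"
      unfolding J_def by (rule distr_distr[OF _ fm]) (metis borel_prod measurable_fst measurable_snd)
    moreover have "fst \<circ> f = Q0" by (simp add: f_def comp_def)
    ultimately have "distr J borel fst = distr ?\<Omega> borel Q0" by simp
    also have "\<dots> = distr ?\<Omega> borel (\<lambda>w. Inf {x. w \<le> cdf M0 x})"
      by (intro distr_cong) (auto simp: spO Q0_def)
    also have "\<dots> = M0" by (rule A.distr_I_eq_M)
    finally show ?thesis .
  qed
  have snd_eq: "distr J borel snd = M1"
  proof -
    have "distr J borel snd = distr ?\<Omega> borel (snd \<circ> f)"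
      unfolding J_def by (rule distr_distr[OF _ fm]) (metis borel_prod measurable_fst measurable_snd)
    moreover have "snd \<circ> f = (\<lambda>u. Q1 (T u))" by (simp add: f_def comp_def)
    ultimately have "distr J borel snd = distr ?\<Omega> borel (\<lambda>u. Q1 (T u))" by simp
    also have "\<dots> = M1"
    proof (rule cdf_unique)
      show "real_distribution (distr ?\<Omega> borel (\<lambda>u. Q1 (T u)))"
        by (intro \<Omega>.real_distribution_distr) (intro measurable_restrict_space1, measurable)
      show "real_distribution M1" by (rule B.real_distribution_axioms)
      show "cdf (distr ?\<Omega> borel (\<lambda>u. Q1 (T u))) = cdf M1"
      proof
        fix x
        let ?c = "cdf M1 x"
        let ?S = "(\<lambda>u. Q1 (T u)) -` {..x} \<inter> {0<..<1}"
        let ?R = "{u\<in>{0<..<1}. T u \<le> ?c}"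
        have Sm: "?S \<in> sets lborel"
        proof -
          have "(\<lambda>u. Q1 (T u)) -` {..x} \<in> sets borel"
          proof -
            have "(\<lambda>u. Q1 (T u)) \<in> borel_measurable borel" by measurable
            from measurable_sets[OF this, of "{..x}"] show ?thesis by simp
          qed
          then show ?thesis by auto
        qed
        have Rm: "?R \<in> sets lborel"
        proof -
          have "{u. T u \<le> ?c} \<in> sets borel" by measurable
          then have "{u. T u \<le> ?c} \<inter> {0<..<1} \<in> sets borel" by auto
          moreover have "?R = {u. T u \<le> ?c} \<inter> {0<..<1}" by auto
          ultimately show ?thesis by simp
        qed
        have SR: "?S - {s} = ?R - {s}"
        proof (intro set_eqI iffI)
          fix u assume "u \<in> ?S - {s}"
          then have u: "0 < u" "u < 1" "u \<noteq> s" "Q1 (T u) \<le> x" by auto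
          then have "0 < T u" "T u < 1" using s_ge s_lt assms(5) unfolding T_def by auto
          then show "u \<in> ?R - {s}" using u B.pseudoinverse[of "T u" x] unfolding Q1_def by auto
        next
          fix u assume "u \<in> ?R - {s}"
          then have u: "0 < u" "u < 1" "u \<noteq> s" "T u \<le> ?c" by auto
          then have "0 < T u" "T u < 1" using s_ge s_lt assms(5) unfolding T_def by auto
          then show "u \<in> ?S - {s}" using u B.pseudoinverse[of "T u" x] unfolding Q1_def by auto
        qed
        have "cdf (distr ?\<Omega> borel (\<lambda>u. Q1 (T u))) x = measure ?\<Omega> ?S"
          unfolding cdf_def
          by (subst measure_distr) (auto simp: spO intro: measurable_restrict_space1)
        also have "\<dots> = measure lborel ?S"
          by (rule measure_restrict_space) auto
        also have "\<dots> = measure lborel (?S - {s})"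
          using Sm by (rule measure_Diff_null_set[symmetric]) auto
        also have "\<dots> = measure lborel (?R - {s})" using SR by simp
        also have "\<dots> = measure lborel ?R"
          using Rm by (rule measure_Diff_null_set) auto
        also have "\<dots> = ?c"
          unfolding T_def using s_ge s_lt assms(5) B.cdf_nonneg[of x] B.cdf_bounded_prob[of x]
          by (intro shift_measure_aux) auto
        finally show "cdf (distr ?\<Omega> borel (\<lambda>u. Q1 (T u))) x = ?c" .
      qed
    qed
    finally show ?thesis .
  qed
  have cJ: "coupling M0 M1 J"
    unfolding coupling_def using fst_eq snd_eq J.prob_space_axioms by (simp add: J_def)
  have Sopen: "{p::real\<times>real. fst p < snd p} \<in> sets borel"
    by (intro borel_open open_Collect_less) (auto intro: continuous_intros)
  have "measure J {p. snd p - fst p \<in> I} \<le> measure J {p. fst p < snd p}"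
  proof (rule J.finite_measure_mono)
    show "{p. snd p - fst p \<in> I} \<subseteq> {p. fst p < snd p}" using Ipos by force
    show "{p::real\<times>real. fst p < snd p} \<in> sets J" unfolding J_def using Sopen by simp
  qed
  also have "\<dots> = measure ?\<Omega> (f -` {p. fst p < snd p} \<inter> space ?\<Omega>)"
    unfolding J_def by (rule measure_distr[OF fm Sopen])
  also have "\<dots> \<le> measure ?\<Omega> {0<..s}"
  proof (rule \<Omega>.finite_measure_mono)
    show "f -` {p. fst p < snd p} \<inter> space ?\<Omega> \<subseteq> {0<..s}"
      using Q0T by (force simp: spO f_def)
    show "{0<..s} \<in> sets ?\<Omega>" using s_lt assms(5) by (auto simp: sets_restrict_space_iff)
  qed
  also have "\<dots> = s"
    using s_lt assms(5) s_ge by (subst measure_restrict_space) auto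
  finally have "measure J {p. snd p - fst p \<in> I} \<le> s" .
  moreover have "measure J {p. snd p - fst p \<in> I} \<ge> 1 - \<alpha>" using assms(9) cJ by blast
  ultimately show False using s_lt by simp
qed

end
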